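(* Let $n\ge1$. (a) If $\alpha$ is an honourable subset of $\coprod_{k=0}^n\mathrm{Sur}([n],[k])$, then $\sum_{k=0}^n k|\alpha_k|\ge n$. (b) Conversely, let $(a_0,\dots,a_n)\in\mathbb{N}_0^{n+1}$ with $a_k\le\binom nk$ for all $k$. If $\sum_{k=0}^n k a_k\ge n$, then there is an honourable subset $\alpha$ of $\coprod_{k=0}^n\mathrm{Sur}([n],[k])$ with $|\alpha_k|=a_k$ for every $k\in\{0,\dots,n\}$.
   Context: $[n]=\{0<\dots<n\}$; $\mathrm{Sur}([n],[k])$ is the set of surjective order-preserving maps $[n]\to[k]$. For $\mu\in\mathrm{Sur}([n],[k])$ let $\mu^\triangle:=\{\max\mu^{-1}(0),\dots,\max\mu^{-1}(k-1)\}\subseteq\{0,\dots,n-1\}$ (a set of cardinality $k$; $\mu\mapsto\mu^\triangle$ is a bijection from $\coprod_{k}\mathrm{Sur}([n],[k])$ onto the power set of $\{0,\dots,n-1\}$). A subset $\alpha\subseteq\coprod_{k=0}^n\mathrm{Sur}([n],[k])$ is honourable if $\bigcup_{\mu\in\alpha}\mu^\triangle=\{0,1,\dots,n-1\}$; $\alpha_k:=\alpha\cap\mathrm{Sur}([n],[k])$. *)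

theory Defs
  imports "HOL-Library.FuncSet"
begin

definition Sur :: "nat \<Rightarrow> nat \<Rightarrow> (nat \<Rightarrow> nat) set" where
  "Sur n k = {\<mu> \<in> {0..n} \<rightarrow>\<^sub>E {0..k}. mono_on {0..n} \<mu> \<and> \<mu> ` {0..n} = {0..k}}"

definition SurAll :: "nat \<Rightarrow> (nat \<times> (nat \<Rightarrow> nat)) set" where
  "SurAll n = (SIGMA k:{0..n}. Sur n k)"

definition tri :: "nat \<Rightarrow> nat \<Rightarrow> (nat \<Rightarrow> nat) \<Rightarrow> nat set" where
  "tri n k \<mu> = (\<lambda>j. Max {i \<in> {0..n}. \<mu> i = j}) ` {0..<k}"

definition honourable :: "nat \<Rightarrow> (nat \<times> (nat \<Rightarrow> nat)) set \<Rightarrow> bool" where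
  "honourable n \<alpha> \<longleftrightarrow> (\<Union>(k, \<mu>)\<in>\<alpha>. tri n k \<mu>) = {0..<n}"

definition layer :: "(nat \<times> (nat \<Rightarrow> nat)) set \<Rightarrow> nat \<Rightarrow> (nat \<Rightarrow> nat) set" where
  "layer \<alpha> k = {\<mu>. (k, \<mu>) \<in> \<alpha>}"

end

theory Submission
  imports Defs
begin

definition cnt :: "nat set \<Rightarrow> nat \<Rightarrow> nat" where
  "cnt S i = card {s\<in>S. s < i}"

definition mu :: "nat \<Rightarrow> nat set \<Rightarrow> nat \<Rightarrow> nat" where
  "mu n S = (\<lambda>i\<in>{0..n}. cnt S i)"

lemma cnt_mono: "finite S \<Longrightarrow> i \<le> j \<Longrightarrow> cnt S i \<le> cnt S j"
  unfolding cnt_def by (rule card_mono) auto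

lemma cnt_Suc_in: "finite S \<Longrightarrow> s \<in> S \<Longrightarrow> cnt S (Suc s) = Suc (cnt S s)"
proof -
  assume f: "finite S" and s: "s \<in> S"
  have "{x\<in>S. x < Suc s} = insert s {x\<in>S. x < s}" using s by auto
  thus ?thesis unfolding cnt_def using f by simp
qed

lemma cnt_lt_card: "finite S \<Longrightarrow> s \<in> S \<Longrightarrow> cnt S s < card S"
  unfolding cnt_def by (rule psubset_card_mono) auto

lemma cnt_inj: "finite S \<Longrightarrow> inj_on (cnt S) S"
proof (rule inj_onI)
  fix x y assume f: "finite S" and x: "x \<in> S" and y: "y \<in> S" and e: "cnt S x = cnt S y"
  show "x = y"
  proof (rule ccontr)
    assume "x \<noteq> y"
    then consider "x < y" | "y < x" by linarith
    thus False
    proof cases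
      case 1
      have "cnt S (Suc x) \<le> cnt S y" using cnt_mono[OF f, of "Suc x" y] 1 by simp
      thus False using cnt_Suc_in[OF f x] e by simp
    next
      case 2
      have "cnt S (Suc y) \<le> cnt S x" using cnt_mono[OF f, of "Suc y" x] 2 by simp
      thus False using cnt_Suc_in[OF f y] e by simp
    qed
  qed
qed

lemma cnt_image: "finite S \<Longrightarrow> cnt S ` S = {0..<card S}"
proof -
  assume f: "finite S"
  have sub: "cnt S ` S \<subseteq> {0..<card S}" using cnt_lt_card[OF f] by auto
  have "card (cnt S ` S) = card {0..<card S}"
    using card_image[OF cnt_inj[OF f]] by simp
  thus ?thesis using card_subset_eq[OF _ sub] by simp
qed

lemma cnt_n: "S \<subseteq> {0..<n} \<Longrightarrow> cnt S n = card S"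
proof -
  assume "S \<subseteq> {0..<n}"
  hence "{s\<in>S. s < n} = S" by auto
  thus ?thesis unfolding cnt_def by simp
qed

lemma mu_Sur: assumes S: "S \<subseteq> {0..<n}" shows "mu n S \<in> Sur n (card S)"
proof -
  have f: "finite S" using S finite_subset by blast
  have bound: "cnt S i \<le> card S" for i unfolding cnt_def using f by (intro card_mono) auto
  have img: "(\<lambda>i. cnt S i) ` {0..n} = {0..card S}"
  proof
    show "(\<lambda>i. cnt S i) ` {0..n} \<subseteq> {0..card S}" using bound by auto
    show "{0..card S} \<subseteq> (\<lambda>i. cnt S i) ` {0..n}"
    proof
      fix v assume v: "v \<in> {0..card S}"
      show "v \<in> (\<lambda>i. cnt S i) ` {0..n}"
      proof (cases "v = card S")
        case True thus ?thesis using cnt_n[OF S] by (intro image_eqI[of _ _ n]) auto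
      next
        case False
        hence "v \<in> cnt S ` S" using v cnt_image[OF f] by auto
        then obtain s where "s \<in> S" "v = cnt S s" by auto
        thus ?thesis using S by (intro image_eqI[of _ _ s]) auto
      qed
    qed
  qed
  show ?thesis unfolding Sur_def mu_def
    using img bound
    by (auto simp: mono_on_def cnt_mono[OF f] intro!: image_cong)
qed

lemma mu_tri: assumes S: "S \<subseteq> {0..<n}" shows "tri n (card S) (mu n S) = S"
proof -
  have f: "finite S" using S finite_subset by blast
  have mx: "Max {i \<in> {0..n}. mu n S i = cnt S s} = s" if s: "s \<in> S" for s
  proof (rule Max_eqI)
    show "finite {i \<in> {0..n}. mu n S i = cnt S s}" by simp
    show "s \<in> {i \<in> {0..n}. mu n S i = cnt S s}" using s S by (auto simp: mu_def)
    fix i assume "i \<in> {i \<in> {0..n}. mu n S i = cnt S s}"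
    hence i: "i \<le> n" "cnt S i = cnt S s" by (auto simp: mu_def)
    show "i \<le> s"
    proof (rule ccontr)
      assume "\<not> i \<le> s"
      hence "cnt S (Suc s) \<le> cnt S i" using cnt_mono[OF f] by simp
      thus False using cnt_Suc_in[OF f s] i by simp
    qed
  qed
  have "tri n (card S) (mu n S) = (\<lambda>j. Max {i \<in> {0..n}. mu n S i = j}) ` (cnt S ` S)"
    unfolding tri_def cnt_image[OF f] ..
  also have "\<dots> = (\<lambda>s. Max {i \<in> {0..n}. mu n S i = cnt S s}) ` S" by (simp add: image_image)
  also have "\<dots> = S" using mx by simp
  finally show ?thesis .
qed

lemma cover:
  "m \<le> n choose k \<Longrightarrow> U \<subseteq> {0..<n} \<Longrightarrow> card U \<le> k * m \<Longrightarrow>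
   \<exists>F. F \<subseteq> {A. A \<subseteq> {0..<n} \<and> card A = k} \<and> card F = m \<and> U \<subseteq> \<Union>F"
proof (induction m arbitrary: U)
  case 0
  hence "U = {}" using finite_subset[of U "{0..<n}"] by auto
  thus ?case by (intro exI[of _ "{}"]) auto
next
  case (Suc m)
  let ?All = "{A. A \<subseteq> {0..<n} \<and> card A = k}"
  have cAll: "card ?All = n choose k" using n_subsets[of "{0..<n}" k] by simp
  have finAll: "finite ?All" by (rule finite_subset[of _ "Pow {0..<n}"]) auto
  have kn: "k \<le> n" using Suc.prems(1) by (metis binomial_eq_0_iff not_le not_less_eq_eq le0 Suc_le_eq)
  have fU: "finite U" using Suc.prems(2) finite_subset by blast
  obtain V where V: "V \<subseteq> U" "card V = min k (card U)" "finite V"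
    using obtain_subset_with_card_n[of "min k (card U)" U] by auto
  have cV: "card V \<le> k" using V by simp
  have "card ({0..<n} - V) = n - card V" using V Suc.prems(2) by (subst card_Diff_subset) auto
  hence "k - card V \<le> card ({0..<n} - V)" using kn by simp
  then obtain W where W: "W \<subseteq> {0..<n} - V" "card W = k - card V" "finite W"
    using obtain_subset_with_card_n by metis
  define A where "A = V \<union> W"
  have cA: "card A = k" unfolding A_def using W V cV
    by (subst card_Un_disjoint) auto
  have AAll: "A \<in> ?All" using cA W V Suc.prems(2) unfolding A_def by auto
  have VA: "V \<subseteq> A" unfolding A_def by auto
  have "card (U - V) = card U - card V" using V fU by (simp add: card_Diff_subset)
  hence cUV: "card (U - V) \<le> k * m" using Suc.prems(3) V(2) by (cases "k \<le> card U") auto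
  obtain F where F: "F \<subseteq> ?All" "card F = m" "U - V \<subseteq> \<Union>F"
    using Suc.IH[of "U - V"] Suc.prems cUV by auto
  have fF: "finite F" using F(1) finAll finite_subset by blast
  show ?case
  proof (cases "A \<in> F")
    case False
    show ?thesis using F AAll False fF VA
      by (intro exI[of _ "insert A F"]) auto
  next
    case True
    have "card F < card ?All" using F(2) Suc.prems(1) cAll by simp
    hence "\<not> ?All \<subseteq> F" using card_mono[OF fF] by (meson not_le)
    then obtain B where B: "B \<in> ?All" "B \<notin> F" by blast
    show ?thesis using F B True fF VA
      by (intro exI[of _ "insert B F"]) auto
  qed
qed

lemma finite_SurAll: "finite (SurAll n)"
proof -
  have "Sur n k \<subseteq> {0..n} \<rightarrow>\<^sub>E {0..k}" for k unfolding Sur_def by auto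
  hence "finite (Sur n k)" for k by (rule finite_subset) (simp add: finite_PiE)
  thus ?thesis unfolding SurAll_def by auto
qed

lemma partA:
  assumes sub: "\<alpha> \<subseteq> SurAll n" and h: "honourable n \<alpha>"
  shows "(\<Sum>k=0..n. k * card (layer \<alpha> k)) \<ge> n"
proof -
  have fa: "finite \<alpha>" using sub finite_SurAll finite_subset by blast
  have "n = card (\<Union>(k, \<mu>)\<in>\<alpha>. tri n k \<mu>)" using h unfolding honourable_def by simp
  also have "\<dots> \<le> (\<Sum>x\<in>\<alpha>. card (case x of (k, \<mu>) \<Rightarrow> tri n k \<mu>))"
    by (rule card_UN_le[OF fa])
  also have "\<dots> \<le> (\<Sum>x\<in>\<alpha>. fst x)"
  proof (rule sum_mono)
    fix x assume "x \<in> \<alpha>"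
    obtain k \<mu> where x: "x = (k, \<mu>)" by fastforce
    have "card (tri n k \<mu>) \<le> card {0..<k}" unfolding tri_def by (rule card_image_le) simp
    thus "card (case x of (k, \<mu>) \<Rightarrow> tri n k \<mu>) \<le> fst x" using x by simp
  qed
  also have "\<alpha> = (SIGMA k:{0..n}. layer \<alpha> k)" using sub unfolding SurAll_def layer_def by auto
  also have "(\<Sum>x\<in>(SIGMA k:{0..n}. layer \<alpha> k). fst x) = (\<Sum>k=0..n. \<Sum>\<mu>\<in>layer \<alpha> k. k)"
  proof -
    have fl: "finite (layer \<alpha> k)" for k
      by (rule finite_subset[of _ "snd ` \<alpha>"]) (force simp: layer_def fa image_iff)+
    have "(\<Sum>k=0..n. \<Sum>\<mu>\<in>layer \<alpha> k. k) = (\<Sum>(k,\<mu>)\<in>(SIGMA k:{0..n}. layer \<alpha> k). k)"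
      by (rule sum.Sigma) (auto simp: fl)
    also have "(\<lambda>(k::nat,\<mu>::nat\<Rightarrow>nat). k) = fst" by auto
    finally show ?thesis by simp
  qed
  also have "\<dots> = (\<Sum>k=0..n. k * card (layer \<alpha> k))" by (simp add: mult.commute)
  finally show ?thesis .
qed


lemma partB:
  assumes ak: "\<forall>k\<in>{0..n}. a k \<le> n choose k" and sm: "(\<Sum>k=0..n. k * a k) \<ge> n"
  shows "\<exists>\<alpha>. \<alpha> \<subseteq> SurAll n \<and> honourable n \<alpha> \<and> (\<forall>k\<in>{0..n}. card (layer \<alpha> k) = a k)"
proof -
  define S where "S k = (\<Sum>j<k. j * a j)" for k
  define U where "U k = {i. i < n \<and> S k \<le> i \<and> i < S (Suc k)}" for k
  have SS: "S (Suc k) = S k + k * a k" for k unfolding S_def by simp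
  have cU: "card (U k) \<le> k * a k" for k
  proof -
    have "U k \<subseteq> {S k..<S (Suc k)}" unfolding U_def by auto
    hence "card (U k) \<le> card {S k..<S (Suc k)}" by (intro card_mono) auto
    thus ?thesis using SS by simp
  qed
  have Sn: "S (Suc n) \<ge> n" using sm unfolding S_def
    by (simp add: atLeast0AtMost lessThan_Suc_atMost)
  have covU: "\<exists>k\<in>{0..n}. i \<in> U k" if i: "i < n" for i
  proof -
    define k where "k = (LEAST k. i < S (Suc k))"
    have ex: "i < S (Suc n)" using i Sn by simp
    have k1: "i < S (Suc k)" unfolding k_def by (rule LeastI[of _ n]) (rule ex)
    have k2: "k \<le> n" unfolding k_def by (rule Least_le) (rule ex)
    have k3: "S k \<le> i"
    proof (cases k)
      case 0 thus ?thesis by (simp add: S_def)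
    next
      case (Suc k')
      have "\<not> i < S (Suc k')" unfolding k_def
        using not_less_Least[of k' "\<lambda>k. i < S (Suc k)"] Suc k_def by simp
      thus ?thesis using Suc by simp
    qed
    show ?thesis using k1 k2 k3 i unfolding U_def by auto
  qed
  have "\<forall>k\<in>{0..n}. \<exists>F. F \<subseteq> {A. A \<subseteq> {0..<n} \<and> card A = k} \<and> card F = a k \<and> U k \<subseteq> \<Union>F"
  proof
    fix k assume k: "k \<in> {0..n}"
    have "U k \<subseteq> {0..<n}" unfolding U_def by auto
    thus "\<exists>F. F \<subseteq> {A. A \<subseteq> {0..<n} \<and> card A = k} \<and> card F = a k \<and> U k \<subseteq> \<Union>F"
      using cover[of "a k" n k "U k"] ak k cU[of k] by blast
  qed
  then obtain F where F: "\<And>k. k \<in> {0..n} \<Longrightarrow> F k \<subseteq> {A. A \<subseteq> {0..<n} \<and> card A = k} \<and> card (F k) = a k \<and> U k \<subseteq> \<Union>(F k)"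
    using bchoice[of "{0..n}"] by metis
  define \<alpha> where "\<alpha> = (SIGMA k:{0..n}. mu n ` F k)"
  have lay: "layer \<alpha> k = mu n ` F k" if "k \<in> {0..n}" for k
    using that unfolding \<alpha>_def layer_def by auto
  have inj: "inj_on (mu n) (F k)" if k: "k \<in> {0..n}" for k
  proof (rule inj_onI)
    fix A B assume A: "A \<in> F k" and B: "B \<in> F k" and e: "mu n A = mu n B"
    have "A = tri n (card A) (mu n A)" using A F[OF k] mu_tri by auto
    also have "\<dots> = tri n (card B) (mu n B)"
    proof -
      have "card A = card B" using A B F[OF k] by auto
      thus ?thesis using e by simp
    qed
    also have "\<dots> = B" using B F[OF k] mu_tri by auto
    finally show "A = B" .
  qed
  have sub: "\<alpha> \<subseteq> SurAll n"
  proof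
    fix x assume "x \<in> \<alpha>"
    then obtain k A where k: "k \<in> {0..n}" and A: "A \<in> F k" and x: "x = (k, mu n A)"
      unfolding \<alpha>_def by auto
    have "A \<subseteq> {0..<n}" "card A = k" using F[OF k] A by auto
    thus "x \<in> SurAll n" using mu_Sur[of A n] k x unfolding SurAll_def by auto
  qed
  have tr: "tri n k (mu n A) = A" if "k \<in> {0..n}" "A \<in> F k" for k A
    using F[OF that(1)] that(2) mu_tri[of A n] by auto
  have hon: "honourable n \<alpha>"
    unfolding honourable_def
  proof
    show "(\<Union>(k, \<mu>)\<in>\<alpha>. tri n k \<mu>) \<subseteq> {0..<n}"
      using tr F unfolding \<alpha>_def by fastforce
    show "{0..<n} \<subseteq> (\<Union>(k, \<mu>)\<in>\<alpha>. tri n k \<mu>)"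
    proof
      fix i assume "i \<in> {0..<n}"
      then obtain k where k: "k \<in> {0..n}" "i \<in> U k" using covU[of i] by auto
      then obtain A where A: "A \<in> F k" "i \<in> A" using F[OF k(1)] by blast
      have "(k, mu n A) \<in> \<alpha>" using k A unfolding \<alpha>_def by auto
      thus "i \<in> (\<Union>(k, \<mu>)\<in>\<alpha>. tri n k \<mu>)" using tr[OF k(1) A(1)] A by force
    qed
  qed
  have "\<forall>k\<in>{0..n}. card (layer \<alpha> k) = a k"
    using lay inj F by (simp add: card_image)
  thus ?thesis using sub hon by blast
qed

theorem mainTheorem11:
  fixes n :: nat
  assumes "n \<ge> 1"
  shows "(\<forall>\<alpha>. \<alpha> \<subseteq> SurAll n \<and> honourable n \<alpha> \<longrightarrow>
            (\<Sum>k=0..n. k * card (layer \<alpha> k)) \<ge> n)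
       \<and> (\<forall>a :: nat \<Rightarrow> nat. (\<forall>k\<in>{0..n}. a k \<le> n choose k) \<and> (\<Sum>k=0..n. k * a k) \<ge> n \<longrightarrow>
            (\<exists>\<alpha>. \<alpha> \<subseteq> SurAll n \<and> honourable n \<alpha> \<and> (\<forall>k\<in>{0..n}. card (layer \<alpha> k) = a k)))"
  using partA partB by blast

end
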